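(* Let $\mathbf{v}(\mathbf{x},t)$ be a smooth velocity field on a domain in $\mathbb{R}^3$, let $\mathbf{x}(t)$, $t\in[t_0,t_1]$, be a trajectory ($\dot{\mathbf{x}}=\mathbf{v}(\mathbf{x},t)$), and for $\tau,t\in[t_0,t_1]$ let $\mathbf{F}_\tau^t$ be the deformation gradient along it, i.e. the solution of $\dot{\mathbf{F}}_\tau^t=\nabla\mathbf{v}(\mathbf{x}(t),t)\mathbf{F}_\tau^t$, $\mathbf{F}_\tau^\tau=\mathbf{I}$. Then: (i) $\mathbf{F}_\tau^t$ admits a unique decomposition $\mathbf{F}_\tau^t=\mathbf{O}_\tau^t\mathbf{M}_\tau^t=\mathbf{N}_\tau^t\mathbf{O}_\tau^t$ in which $\mathbf{O}_\tau^t$ is a rotational linear process, $\mathbf{M}_\tau^t$ is an irrotational family, and $(\mathbf{N}_\tau^t)^T$ is irrotational as a function of $\tau$ (i.e. $[\frac{d}{d\tau}(\mathbf{N}_\tau^t)^T][(\mathbf{N}_\tau^t)^T]^{-1}$ is symmetric). (ii) $\mathbf{M}_\tau^t$ and $\mathbf{N}_\tau^t=(\mathbf{M}_t^\tau)^{-1}$ are nonsingular, have the same singular values as $\mathbf{F}_\tau^t$, and satisfy $(\mathbf{M}_\tau^t)^T\mathbf{M}_\tau^t=(\mathbf{F}_\tau^t)^T\mathbf{F}_\tau^t$ and $\mathbf{N}_\tau^t(\mathbf{N}_\tau^t)^T=\mathbf{F}_\tau^t(\mathbf{F}_\tau^t)^T$ (so they share the principal strain values and axes of the polar stretch tensors).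 (iii) The factors are the unique solutions of $$\dot{\mathbf{O}}_\tau^t=\mathbf{W}(\mathbf{x}(t),t)\mathbf{O}_\tau^t,\ \mathbf{O}_\tau^\tau=\mathbf{I};\qquad \dot{\mathbf{M}}_\tau^t=\big[\mathbf{O}_t^\tau\mathbf{D}(\mathbf{x}(t),t)\mathbf{O}_\tau^t\big]\mathbf{M}_\tau^t,\ \mathbf{M}_\tau^\tau=\mathbf{I};$$ $$\frac{d}{d\tau}(\mathbf{N}_\tau^t)^T=-\big[\mathbf{O}_\tau^t\mathbf{D}(\mathbf{x}(\tau),\tau)\mathbf{O}_t^\tau\big](\mathbf{N}_\tau^t)^T,\ (\mathbf{N}_t^t)^T=\mathbf{I}.$$
   Context: $\mathbf{W}=\frac12[\nabla\mathbf{v}-(\nabla\mathbf{v})^T]$ (spin tensor) and $\mathbf{D}=\frac12[\nabla\mathbf{v}+(\nabla\mathbf{v})^T]$ (rate-of-strain tensor). A linear process is a $C^1$ two-parameter family $\mathbf{T}_\tau^t$ of linear maps with $\mathbf{T}_t^t=\mathbf{I}$ and $\mathbf{T}_\tau^t=\mathbf{T}_s^t\mathbf{T}_\tau^s$ for all $\tau,s,t$. A smooth two-parameter family $\mathbf{T}_\tau^t$ is rotational if $\dot{\mathbf{T}}_\tau^t(\mathbf{T}_\tau^t)^{-1}$ is skew-symmetric for all $\tau,t$ (equivalently $\mathbf{T}_\tau^t\in SO(3)$), and irrotational if $\dot{\mathbf{T}}_\tau^t(\mathbf{T}_\tau^t)^{-1}$ is symmetric for all $\tau,t$; the dot denotes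 $\partial/\partial t$. Also $\mathbf{O}_t^\tau=(\mathbf{O}_\tau^t)^{-1}=(\mathbf{O}_\tau^t)^T$. *)

theory Defs
  imports "HOL-Analysis.Analysis"
begin

type_synonym mat3 = "real^3^3"

text \<open>Two-parameter families T tau t of 3x3 matrices, considered for tau, t in an interval I.
  The dot denotes the partial derivative in the second (upper) parameter t.\<close>

definition dt :: "real set \<Rightarrow> (real \<Rightarrow> real \<Rightarrow> mat3) \<Rightarrow> real \<Rightarrow> real \<Rightarrow> mat3" where
  "dt I T \<tau> t = vector_derivative (\<lambda>s. T \<tau> s) (at t within I)"

definition dtau :: "real set \<Rightarrow> (real \<Rightarrow> real \<Rightarrow> mat3) \<Rightarrow> real \<Rightarrow> real \<Rightarrow> mat3" where
  "dtau I T \<tau> t = vector_derivative (\<lambda>s. T s t) (at \<tau> within I)"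

definition skew_sym :: "mat3 \<Rightarrow> bool" where
  "skew_sym A \<longleftrightarrow> transpose A = - A"

definition sym_mat :: "mat3 \<Rightarrow> bool" where
  "sym_mat A \<longleftrightarrow> transpose A = A"

definition C1_family :: "real set \<Rightarrow> (real \<Rightarrow> real \<Rightarrow> mat3) \<Rightarrow> bool" where
  "C1_family I T \<longleftrightarrow>
     (\<forall>\<tau>\<in>I. \<forall>t\<in>I. ((\<lambda>s. T \<tau> s) has_vector_derivative dt I T \<tau> t) (at t within I)
                   \<and> ((\<lambda>s. T s t) has_vector_derivative dtau I T \<tau> t) (at \<tau> within I))
   \<and> continuous_on (I \<times> I) (\<lambda>(\<tau>, t). dt I T \<tau> t)
   \<and> continuous_on (I \<times> I) (\<lambda>(\<tau>, t). dtau I T \<tau> t)"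

definition linear_process :: "real set \<Rightarrow> (real \<Rightarrow> real \<Rightarrow> mat3) \<Rightarrow> bool" where
  "linear_process I T \<longleftrightarrow> C1_family I T
     \<and> (\<forall>t\<in>I. T t t = mat 1)
     \<and> (\<forall>\<tau>\<in>I. \<forall>s\<in>I. \<forall>t\<in>I. T \<tau> t = T s t ** T \<tau> s)"

definition rotational :: "real set \<Rightarrow> (real \<Rightarrow> real \<Rightarrow> mat3) \<Rightarrow> bool" where
  "rotational I T \<longleftrightarrow> C1_family I T \<and>
     (\<forall>\<tau>\<in>I. \<forall>t\<in>I. invertible (T \<tau> t) \<and> skew_sym (dt I T \<tau> t ** matrix_inv (T \<tau> t)))"

definition irrotational :: "real set \<Rightarrow> (real \<Rightarrow> real \<Rightarrow> mat3) \<Rightarrow> bool" where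
  "irrotational I T \<longleftrightarrow> C1_family I T \<and>
     (\<forall>\<tau>\<in>I. \<forall>t\<in>I. invertible (T \<tau> t) \<and> sym_mat (dt I T \<tau> t ** matrix_inv (T \<tau> t)))"

definition irrotational_tau :: "real set \<Rightarrow> (real \<Rightarrow> real \<Rightarrow> mat3) \<Rightarrow> bool" where
  "irrotational_tau I T \<longleftrightarrow> C1_family I T \<and>
     (\<forall>\<tau>\<in>I. \<forall>t\<in>I. invertible (T \<tau> t) \<and> sym_mat (dtau I T \<tau> t ** matrix_inv (T \<tau> t)))"

text \<open>Singular values with multiplicity: multiplicity of sigma >= 0 is the dimension of the
  eigenspace of the symmetric matrix A^T A for eigenvalue sigma^2.\<close>
definition sv_mult :: "mat3 \<Rightarrow> real \<Rightarrow> nat" where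
  "sv_mult A \<sigma> = (if \<sigma> \<ge> 0 then dim {v. (transpose A ** A) *v v = (\<sigma>^2) *\<^sub>R v} else 0)"

definition same_singular_values :: "mat3 \<Rightarrow> mat3 \<Rightarrow> bool" where
  "same_singular_values A B \<longleftrightarrow> sv_mult A = sv_mult B"

definition spin :: "mat3 \<Rightarrow> mat3" where
  "spin L = (1/2) *\<^sub>R (L - transpose L)"

definition strain_rate :: "mat3 \<Rightarrow> mat3" where
  "strain_rate L = (1/2) *\<^sub>R (L + transpose L)"

definition OMN_decomp :: "real set \<Rightarrow> (real \<Rightarrow> real \<Rightarrow> mat3) \<Rightarrow> (real \<Rightarrow> real \<Rightarrow> mat3)
    \<Rightarrow> (real \<Rightarrow> real \<Rightarrow> mat3) \<Rightarrow> (real \<Rightarrow> real \<Rightarrow> mat3) \<Rightarrow> bool" where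
  "OMN_decomp I F R M N \<longleftrightarrow>
     (\<forall>\<tau>\<in>I. \<forall>t\<in>I. F \<tau> t = R \<tau> t ** M \<tau> t \<and> F \<tau> t = N \<tau> t ** R \<tau> t)
   \<and> linear_process I R \<and> rotational I R
   \<and> irrotational I M
   \<and> irrotational_tau I (\<lambda>\<tau> t. transpose (N \<tau> t))"

end

theory Submission
  imports Defs
begin


lemma mm_bb: "bounded_bilinear ((**) :: mat3 \<Rightarrow> mat3 \<Rightarrow> mat3)"
proof
  fix a a' b b' :: mat3 and r :: real
  show "(a + a') ** b = a ** b + a' ** b"
    by (vector matrix_matrix_mult_def sum.distrib[symmetric] field_simps)
  show "a ** (b + b') = a ** b + a ** b'" by (rule matrix_add_ldistrib)
  show "(r *\<^sub>R a) ** b = r *\<^sub>R (a ** b)" by (simp add: scalar_matrix_assoc)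
  show "a ** (r *\<^sub>R b) = r *\<^sub>R (a ** b)" by (simp add: matrix_scalar_ac scalar_matrix_assoc)
next
  have ent: "\<bar>A $ i $ j\<bar> \<le> norm A" for A :: mat3 and i j
    using component_le_norm_cart[of "A$i" j] Finite_Cartesian_Product.norm_nth_le[of A i] by linarith
  have "norm (a ** b) \<le> norm a * norm b * 27" for a b :: mat3
  proof -
    have e: "\<bar>(a ** b) $ i $ j\<bar> \<le> 3 * (norm a * norm b)" for i j
    proof -
      have "\<bar>(a ** b) $ i $ j\<bar> = \<bar>\<Sum>k\<in>UNIV. a $ i $ k * b $ k $ j\<bar>"
        by (simp add: matrix_matrix_mult_def)
      also have "\<dots> \<le> (\<Sum>k\<in>(UNIV::3 set). \<bar>a $ i $ k\<bar> * \<bar>b $ k $ j\<bar>)"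
        by (metis (no_types, lifting) abs_mult sum_abs sum.cong)
      also have "\<dots> \<le> (\<Sum>k\<in>(UNIV::3 set). norm a * norm b)"
        by (intro sum_mono mult_mono ent) auto
      finally show ?thesis by simp
    qed
    have "norm (a ** b) \<le> (\<Sum>i\<in>UNIV. norm ((a ** b) $ i))"
      unfolding norm_vec_def by (rule L2_set_le_sum) simp
    also have "\<dots> \<le> (\<Sum>i\<in>(UNIV::3 set). (\<Sum>j\<in>(UNIV::3 set). \<bar>(a ** b) $ i $ j\<bar>))"
      by (intro sum_mono) (simp add: norm_le_l1_cart)
    also have "\<dots> \<le> (\<Sum>i\<in>(UNIV::3 set). (\<Sum>j\<in>(UNIV::3 set). 3 * (norm a * norm b)))"
      by (intro sum_mono e)
    finally show ?thesis by simp
  qed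
  then show "\<exists>K. \<forall>(a::mat3) (b::mat3). norm (a ** b) \<le> norm a * norm b * K" by blast
qed

lemma transpose_bl: "bounded_linear (transpose :: mat3 \<Rightarrow> mat3)"
proof -
  have "linear (transpose :: mat3 \<Rightarrow> mat3)"
    by (rule linearI) (vector transpose_def)+
  then show ?thesis by (simp add: linear_conv_bounded_linear)
qed



fun pic :: "(real \<Rightarrow> mat3) \<Rightarrow> real \<Rightarrow> nat \<Rightarrow> real \<Rightarrow> mat3" where
  "pic C a 0 t = mat 1"
| "pic C a (Suc n) t = mat 1 + integral {a..t} (\<lambda>s. C s ** pic C a n s)"

lemma poly_int:
  fixes K M a t :: real
  assumes "a \<le> t"
  shows "((\<lambda>s. K * (M * (K * (s - a)) ^ m / fact m)) has_integral
           M * (K * (t - a)) ^ Suc m / fact (Suc m)) {a..t}"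
proof -
  show ?thesis
  proof -
    have d: "((\<lambda>s. M * (K * (s - a)) ^ Suc m / fact (Suc m)) has_vector_derivative
              K * (M * (K * (s - a)) ^ m / fact m)) (at s within {a..t})" for s
    proof -
      have "((\<lambda>s. M * (K * (s - a)) ^ Suc m / fact (Suc m)) has_real_derivative
              K * (M * (K * (s - a)) ^ m / fact m)) (at s within {a..t})"
        by (rule derivative_eq_intros refl | simp)+
      then show ?thesis by (simp add: has_real_derivative_iff_has_vector_derivative)
    qed
    have "((\<lambda>s. K * (M * (K * (s - a)) ^ m / fact m)) has_integral
           M * (K * (t - a)) ^ Suc m / fact (Suc m) - M * (K * (a - a)) ^ Suc m / fact (Suc m)) {a..t}"
      by (rule fundamental_theorem_of_calculus[OF assms]) (use d in auto)
    then show ?thesis by simp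
  qed
qed

lemma mm_cont: "continuous_on S f \<Longrightarrow> continuous_on S g \<Longrightarrow> continuous_on S (\<lambda>x. (f x :: mat3) ** (g x :: mat3))"
  by (rule bounded_bilinear.continuous_on[OF mm_bb])

lemma mm_deriv:
  "(f has_vector_derivative f') (at x within s) \<Longrightarrow> (g has_vector_derivative g') (at x within s) \<Longrightarrow>
   ((\<lambda>x. (f x :: mat3) ** (g x :: mat3)) has_vector_derivative (f x ** g' + f' ** g x)) (at x within s)"
  by (rule bounded_bilinear.has_vector_derivative[OF mm_bb])

lemma lin_exist:
  fixes C :: "real \<Rightarrow> mat3" and a b :: real
  assumes ab: "a \<le> b" and cC: "continuous_on {a..b} C"
  shows "\<exists>\<Phi>. \<Phi> a = mat 1 \<and> (\<forall>t\<in>{a..b}. (\<Phi> has_vector_derivative C t ** \<Phi> t) (at t within {a..b}))"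
proof -
  obtain K0 where K0: "\<And>X Y. norm ((X::mat3) ** (Y::mat3)) \<le> norm X * norm Y * K0"
    using bounded_bilinear.bounded[OF mm_bb] by force
  have "compact (C ` {a..b})" by (rule compact_continuous_image[OF cC]) simp
  then obtain B where B: "\<And>s. s \<in> {a..b} \<Longrightarrow> norm (C s) \<le> B"
    by (meson bounded_iff compact_imp_bounded imageI)
  define K where "K = \<bar>B * K0\<bar> + 1"
  have Kpos: "K > 0" by (simp add: K_def)
  have KC: "norm (C s ** X) \<le> K * norm X" if "s \<in> {a..b}" for s and X :: mat3
  proof -
    have "norm (C s ** X) \<le> norm (C s) * norm X * K0" by (rule K0)
    also have "\<dots> \<le> \<bar>B * K0\<bar> * norm X"
    proof -
      have B0: "B \<ge> 0" using B[OF that] norm_ge_zero[of "C s"] by linarith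
      have "norm (C s) * K0 \<le> norm (C s) * \<bar>K0\<bar>" by (simp add: mult_left_mono)
      also have "\<dots> \<le> B * \<bar>K0\<bar>" by (rule mult_right_mono[OF B[OF that]]) simp
      also have "\<dots> = \<bar>B * K0\<bar>" using B0 by (simp add: abs_mult)
      finally have "norm (C s) * K0 \<le> \<bar>B * K0\<bar>" .
      then have "norm X * (norm (C s) * K0) \<le> norm X * \<bar>B * K0\<bar>" by (simp add: mult_left_mono)
      then show ?thesis by (simp add: ac_simps)
    qed
    also have "\<dots> \<le> K * norm X" by (simp add: K_def distrib_right)
    finally show ?thesis .
  qed
  let ?P = "pic C a"
  have cont: "continuous_on {a..b} (?P n)" for n
  proof (induction n)
    case 0 then show ?case by simp
  next
    case (Suc n)
    have "(\<lambda>s. C s ** ?P n s) integrable_on {a..b}"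
      by (intro integrable_continuous_real mm_cont cC Suc)
    then show ?case
      by (simp only: pic.simps) (intro continuous_intros indefinite_integral_continuous_1)
  qed
  have intg: "(\<lambda>s. C s ** ?P n s) integrable_on {a..t}" if "t \<in> {a..b}" for n t
    by (rule integrable_continuous_real, rule continuous_on_subset[OF mm_cont[OF cC cont]])
       (use that in auto)
  define M where "M = norm (mat 1 :: mat3)"
  define d where "d n t = ?P (Suc n) t - ?P n t" for n t
  have d_bound: "norm (d n t) \<le> M * (K * (t - a)) ^ Suc n / fact (Suc n)" if "t \<in> {a..b}" for n t
    using that
  proof (induction n arbitrary: t)
    case 0
    have "norm (d 0 t) = norm (integral {a..t} (\<lambda>s. C s ** mat 1))"
      by (simp add: d_def)
    also have "\<dots> \<le> integral {a..t} (\<lambda>s. K * (M * (K * (s - a)) ^ 0 / fact 0))"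
      using 0 by (intro integral_norm_bound_integral)
        (auto intro!: integrable_continuous_real continuous_intros cC[THEN continuous_on_subset]
              simp: M_def KC[of _ "mat 1", simplified])
    also have "\<dots> = M * (K * (t - a)) ^ Suc 0 / fact (Suc 0)"
      using poly_int[of a t K M 0] 0 by (simp add: integral_unique)
    finally show ?case .
  next
    case (Suc n)
    have "d (Suc n) t = integral {a..t} (\<lambda>s. C s ** ?P (Suc n) s) - integral {a..t} (\<lambda>s. C s ** ?P n s)"
      by (simp add: d_def)
    also have "\<dots> = integral {a..t} (\<lambda>s. C s ** d n s)"
      using intg[OF Suc.prems]
      by (simp add: integral_diff[symmetric] d_def bounded_bilinear.diff_right[OF mm_bb]
                del: pic.simps)
    finally have "norm (d (Suc n) t) = norm (integral {a..t} (\<lambda>s. C s ** d n s))" by simp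
    also have "\<dots> \<le> integral {a..t} (\<lambda>s. K * (M * (K * (s - a)) ^ Suc n / fact (Suc n)))"
    proof (rule integral_norm_bound_integral)
      show "(\<lambda>s. C s ** d n s) integrable_on {a..t}"
        using integrable_diff[OF intg[OF Suc.prems, of "Suc n"] intg[OF Suc.prems, of n]]
        by (simp add: d_def bounded_bilinear.diff_right[OF mm_bb] del: pic.simps)
      show "(\<lambda>s. K * (M * (K * (s - a)) ^ Suc n / fact (Suc n))) integrable_on {a..t}"
        by (intro integrable_continuous_real continuous_intros) (auto simp del: fact_Suc)
      fix s assume s: "s \<in> {a..t}"
      then have sab: "s \<in> {a..b}" using Suc.prems by auto
      have "norm (C s ** d n s) \<le> K * norm (d n s)" by (rule KC[OF sab])
      also have "\<dots> \<le> K * (M * (K * (s - a)) ^ Suc n / fact (Suc n))"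
        using mult_left_mono[OF Suc.IH[OF sab], of K] Kpos by simp
      finally show "norm (C s ** d n s) \<le> K * (M * (K * (s - a)) ^ Suc n / fact (Suc n))" .
    qed
    also have "\<dots> = M * (K * (t - a)) ^ Suc (Suc n) / fact (Suc (Suc n))"
      by (rule integral_unique[OF poly_int]) (use Suc.prems in auto)
    finally show ?case .
  qed
  have tele: "?P n t = mat 1 + (\<Sum>i<n. d i t)" for n t
    by (induction n) (simp, simp add: d_def del: pic.simps)
  have Mm: "norm (d n t) \<le> M * (K * (b - a)) ^ Suc n / fact (Suc n)" if "t \<in> {a..b}" for n t
  proof -
    have "(K * (t - a)) ^ Suc n \<le> (K * (b - a)) ^ Suc n"
      using that Kpos by (intro power_mono mult_left_mono) auto
    then have "M * (K * (t - a)) ^ Suc n / fact (Suc n) \<le> M * (K * (b - a)) ^ Suc n / fact (Suc n)"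
      by (intro divide_right_mono mult_left_mono) (auto simp: M_def)
    then show ?thesis using d_bound[OF that, of n] by linarith
  qed
  have summ: "summable (\<lambda>n. M * (K * (b - a)) ^ Suc n / fact (Suc n))"
  proof -
    have "summable (\<lambda>n. (K * (b - a)) ^ n / fact n)"
      using summable_exp_generic[of "K * (b - a)"] by (simp add: divide_inverse mult.commute)
    then have "summable (\<lambda>n. (K * (b - a)) ^ Suc n / fact (Suc n))"
      by (subst summable_Suc_iff)
    from summable_mult[OF this, of M] show ?thesis by (simp add: mult.assoc times_divide_eq_right del: fact_Suc)
  qed
  have ul0: "uniform_limit {a..b} (\<lambda>n t. \<Sum>i<n. d i t) (\<lambda>t. \<Sum>i. d i t) sequentially"
    by (rule Weierstrass_m_test[OF Mm summ])
  define \<Phi> where "\<Phi> t = mat 1 + (\<Sum>i. d i t)" for t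
  have ul: "uniform_limit {a..b} ?P \<Phi> sequentially"
    unfolding \<Phi>_def tele by (intro uniform_limit_intros ul0)
  have cPhi: "continuous_on {a..b} \<Phi>"
    by (rule uniform_limit_theorem[OF _ ul]) (auto intro!: always_eventually cont)
  have eq: "\<Phi> t = mat 1 + integral {a..t} (\<lambda>s. C s ** \<Phi> s)" if t: "t \<in> {a..b}" for t
  proof -
    have sub: "{a..t} \<subseteq> {a..b}" using t by auto
    have ul2: "uniform_limit {a..t} (\<lambda>n s. C s ** ?P n s) (\<lambda>s. C s ** \<Phi> s) sequentially"
    proof (rule bounded_bilinear.bounded_uniform_limit[OF mm_bb])
      show "uniform_limit {a..t} (\<lambda>n. C) C sequentially" by (rule uniform_limit_const)
      show "uniform_limit {a..t} ?P \<Phi> sequentially" by (rule uniform_limit_on_subset[OF ul sub])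
      show "bounded (\<Phi> ` {a..t})"
        by (intro compact_imp_bounded compact_continuous_image continuous_on_subset[OF cPhi sub]) auto
      show "bounded (C ` {a..t})"
        by (intro compact_imp_bounded compact_continuous_image continuous_on_subset[OF cC sub]) auto
    qed
    obtain In J where In: "\<And>n. ((\<lambda>s. C s ** ?P n s) has_integral In n) {a..t}"
      and J: "((\<lambda>s. C s ** \<Phi> s) has_integral J) {a..t}" and lim: "In \<longlonglongrightarrow> J"
      by (rule uniform_limit_integral[OF ul2])
         (auto intro!: mm_cont continuous_on_subset[OF cC sub] continuous_on_subset[OF cont sub])
    have l1: "(\<lambda>n. ?P (Suc n) t) \<longlonglongrightarrow> mat 1 + J"
    proof -
      have "?P (Suc n) t = mat 1 + In n" for n using In[of n] by (simp add: integral_unique)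
      then show ?thesis using tendsto_add[OF tendsto_const lim, of "mat 1"] by simp
    qed
    have l2: "(\<lambda>n. ?P n t) \<longlonglongrightarrow> \<Phi> t"
      using ul t by (simp add: tendsto_uniform_limitI)
    then have "(\<lambda>n. ?P (Suc n) t) \<longlonglongrightarrow> \<Phi> t" by (rule LIMSEQ_Suc)
    with l1 have "\<Phi> t = mat 1 + J" using LIMSEQ_unique by blast
    then show ?thesis using J by (simp add: integral_unique)
  qed
  show ?thesis
  proof (intro exI conjI ballI)
    show "\<Phi> a = mat 1" using eq[of a] ab by simp
    fix t assume t: "t \<in> {a..b}"
    have "((\<lambda>t. mat 1 + integral {a..t} (\<lambda>s. C s ** \<Phi> s)) has_vector_derivative C t ** \<Phi> t) (at t within {a..b})"
      using integral_has_vector_derivative[OF mm_cont[OF cC cPhi] t]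
      by (intro derivative_eq_intros) auto
    then show "(\<Phi> has_vector_derivative C t ** \<Phi> t) (at t within {a..b})"
      using has_vector_derivative_transform[OF t, of \<Phi> "\<lambda>t. mat 1 + integral {a..t} (\<lambda>s. C s ** \<Phi> s)"] eq by blast
  qed
qed



lemma transpose_neg: "transpose (- X :: mat3) = - transpose X"
  by (vector transpose_def)
lemma transpose_add: "transpose (X + Y :: mat3) = transpose X + transpose Y"
  by (vector transpose_def)
lemma transpose_diff: "transpose (X - Y :: mat3) = transpose X - transpose Y"
  by (vector transpose_def)
lemma mm_neg_left: "(- (X::mat3)) ** (Y::mat3) = - (X ** Y)"
  by (rule bounded_bilinear.minus_left[OF mm_bb])
lemma mm_neg_right: "(X::mat3) ** (- (Y::mat3)) = - (X ** Y)"
  by (rule bounded_bilinear.minus_right[OF mm_bb])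

lemma transpose_deriv:
  "(f has_vector_derivative f') F \<Longrightarrow> ((\<lambda>x. transpose (f x :: mat3)) has_vector_derivative transpose f') F"
  by (rule bounded_linear.has_vector_derivative[OF transpose_bl])

lemma transpose_cont: "continuous_on S f \<Longrightarrow> continuous_on S (\<lambda>x. transpose (f x :: mat3))"
  by (rule bounded_linear.continuous_on[OF transpose_bl])

lemma lin_exist_left:
  fixes C :: "real \<Rightarrow> mat3" and a b :: real
  assumes ab: "a \<le> b" and cC: "continuous_on {a..b} C"
  shows "\<exists>\<Psi>. \<Psi> a = mat 1 \<and> (\<forall>t\<in>{a..b}. (\<Psi> has_vector_derivative - (\<Psi> t ** C t)) (at t within {a..b}))"
proof -
  have "continuous_on {a..b} (\<lambda>t. - transpose (C t))"
    by (intro continuous_intros transpose_cont cC)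
  from lin_exist[OF ab this] obtain Z where Z: "Z a = mat 1"
    "\<And>t. t \<in> {a..b} \<Longrightarrow> (Z has_vector_derivative (- transpose (C t)) ** Z t) (at t within {a..b})"
    by blast
  show ?thesis
  proof (intro exI[of _ "\<lambda>t. transpose (Z t)"] conjI ballI)
    show "transpose (Z a) = mat 1" using Z by simp
    fix t assume t: "t \<in> {a..b}"
    have "transpose ((- transpose (C t)) ** Z t) = - (transpose (Z t) ** C t)"
      by (simp add: matrix_transpose_mul transpose_neg mm_neg_right)
    then show "((\<lambda>t. transpose (Z t)) has_vector_derivative - (transpose (Z t) ** C t)) (at t within {a..b})"
      using transpose_deriv[OF Z(2)[OF t]] by simp
  qed
qed

lemma deriv_const_zero:
  fixes f :: "real \<Rightarrow> mat3"
  assumes "\<And>t. t \<in> {a..b} \<Longrightarrow> (f has_vector_derivative 0) (at t within {a..b})"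
    and "s \<in> {a..b}" "t \<in> {a..b}"
  shows "f t = f s"
  using has_derivative_zero_unique[of "{a..b}" f t s] assms
  by (auto simp: has_vector_derivative_def)

lemma fund_inv:
  fixes C \<Phi> \<Psi> :: "real \<Rightarrow> mat3"
  assumes ab: "a \<le> b"
    and P: "\<Phi> a = mat 1" "\<And>t. t \<in> {a..b} \<Longrightarrow> (\<Phi> has_vector_derivative C t ** \<Phi> t) (at t within {a..b})"
    and Q: "\<Psi> a = mat 1" "\<And>t. t \<in> {a..b} \<Longrightarrow> (\<Psi> has_vector_derivative - (\<Psi> t ** C t)) (at t within {a..b})"
    and t: "t \<in> {a..b}"
  shows "\<Psi> t ** \<Phi> t = mat 1" "\<Phi> t ** \<Psi> t = mat 1"
proof -
  have "(\<lambda>t. \<Psi> t ** \<Phi> t) t = (\<lambda>t. \<Psi> t ** \<Phi> t) a"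
  proof (rule deriv_const_zero[OF _ _ t])
    fix s assume s: "s \<in> {a..b}"
    have "\<Psi> s ** (C s ** \<Phi> s) + (- (\<Psi> s ** C s)) ** \<Phi> s = 0"
      by (simp add: mm_neg_left matrix_mul_assoc)
    then show "((\<lambda>t. \<Psi> t ** \<Phi> t) has_vector_derivative 0) (at s within {a..b})"
      using mm_deriv[OF Q(2)[OF s] P(2)[OF s]] by simp
  qed (use ab in auto)
  then show "\<Psi> t ** \<Phi> t = mat 1" using P Q by simp
  then show "\<Phi> t ** \<Psi> t = mat 1" using matrix_left_right_inverse by blast
qed

lemma lin_unique:
  fixes C Y1 Y2 :: "real \<Rightarrow> mat3"
  assumes ab: "a \<le> b" and cC: "continuous_on {a..b} C"
    and Y1: "\<And>t. t \<in> {a..b} \<Longrightarrow> (Y1 has_vector_derivative C t ** Y1 t) (at t within {a..b})"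
    and Y2: "\<And>t. t \<in> {a..b} \<Longrightarrow> (Y2 has_vector_derivative C t ** Y2 t) (at t within {a..b})"
    and s: "s \<in> {a..b}" and eqs: "Y1 s = Y2 s" and t: "t \<in> {a..b}"
  shows "Y1 t = Y2 t"
proof -
  obtain \<Phi> where P: "\<Phi> a = mat 1" "\<And>t. t \<in> {a..b} \<Longrightarrow> (\<Phi> has_vector_derivative C t ** \<Phi> t) (at t within {a..b})"
    using lin_exist[OF ab cC] by blast
  obtain \<Psi> where Q: "\<Psi> a = mat 1" "\<And>t. t \<in> {a..b} \<Longrightarrow> (\<Psi> has_vector_derivative - (\<Psi> t ** C t)) (at t within {a..b})"
    using lin_exist_left[OF ab cC] by blast
  have c: "\<Psi> t ** Y t = \<Psi> s ** Y s"
    if Y: "\<And>t. t \<in> {a..b} \<Longrightarrow> (Y has_vector_derivative C t ** Y t) (at t within {a..b})" for Y :: "real \<Rightarrow> mat3"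
  proof -
    have "(\<lambda>t. \<Psi> t ** Y t) t = (\<lambda>t. \<Psi> t ** Y t) s"
    proof (rule deriv_const_zero[OF _ s t])
      fix r assume r: "r \<in> {a..b}"
      have "\<Psi> r ** (C r ** Y r) + (- (\<Psi> r ** C r)) ** Y r = 0"
        by (simp add: mm_neg_left matrix_mul_assoc)
      then show "((\<lambda>t. \<Psi> t ** Y t) has_vector_derivative 0) (at r within {a..b})"
        using mm_deriv[OF Q(2)[OF r] Y[OF r]] by simp
    qed
    then show ?thesis by simp
  qed
  have "Y1 t = \<Phi> t ** (\<Psi> t ** Y1 t)"
    using fund_inv(2)[OF ab P Q t] by (simp add: matrix_mul_assoc)
  also have "\<dots> = \<Phi> t ** (\<Psi> t ** Y2 t)" using c[OF Y1] c[OF Y2] eqs by simp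
  also have "\<dots> = Y2 t"
    using fund_inv(2)[OF ab P Q t] by (simp add: matrix_mul_assoc)
  finally show ?thesis .
qed



lemma inv_eq:
  fixes A B :: mat3
  assumes "A ** B = mat 1"
  shows "invertible A" "matrix_inv A = B"
proof -
  have BA: "B ** A = mat 1" using assms matrix_left_right_inverse by blast
  then show "invertible A" using assms unfolding invertible_def by blast
  define C where "C = matrix_inv A"
  have "A ** C = mat 1 \<and> C ** A = mat 1"
    unfolding C_def matrix_inv_def by (rule someI[of _ B]) (use assms BA in simp)
  then have "C = C ** (A ** B)" "C ** A = mat 1" using assms by auto
  then have "C = B" by (simp add: matrix_mul_assoc)
  then show "matrix_inv A = B" by (simp add: C_def)
qed

lemma inv_props:
  fixes A :: mat3
  assumes "invertible A"
  shows "A ** matrix_inv A = mat 1" "matrix_inv A ** A = mat 1"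
proof -
  obtain B where "A ** B = mat 1" using assms invertible_def by blast
  then show "A ** matrix_inv A = mat 1" "matrix_inv A ** A = mat 1"
    using inv_eq matrix_left_right_inverse by metis+
qed

lemma sv_orth:
  fixes X Q :: mat3
  assumes Q1: "Q ** transpose Q = mat 1" and Q2: "transpose Q ** Q = mat 1"
  shows "sv_mult (X ** transpose Q) = sv_mult X"
proof
  fix \<sigma> :: real
  define S where "S = transpose X ** X"
  define E where "E = {w. S *v w = (\<sigma>^2) *\<^sub>R w}"
  have tr: "transpose (X ** transpose Q) ** (X ** transpose Q) = Q ** S ** transpose Q"
    by (simp add: S_def matrix_transpose_mul matrix_mul_assoc)
  have E': "{v. (Q ** S ** transpose Q) *v v = (\<sigma>^2) *\<^sub>R v} = (\<lambda>w. Q *v w) ` E"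
  proof (intro set_eqI iffI)
    fix v assume "v \<in> {v. (Q ** S ** transpose Q) *v v = (\<sigma>^2) *\<^sub>R v}"
    then have v: "(Q ** S ** transpose Q) *v v = (\<sigma>^2) *\<^sub>R v" by simp
    have "S *v (transpose Q *v v) = transpose Q *v ((Q ** S ** transpose Q) *v v)"
      by (simp add: matrix_vector_mul_assoc matrix_mul_assoc Q2 del: transpose_matrix_vector)
    also have "\<dots> = (\<sigma>^2) *\<^sub>R (transpose Q *v v)" by (simp add: v matrix_vector_mult_scaleR)
    finally have "transpose Q *v v \<in> E" by (simp add: E_def del: transpose_matrix_vector)
    moreover have "v = Q *v (transpose Q *v v)" by (simp add: matrix_vector_mul_assoc Q1 del: transpose_matrix_vector)
    ultimately show "v \<in> (\<lambda>w. Q *v w) ` E" by (metis image_eqI)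
  next
    fix v assume "v \<in> (\<lambda>w. Q *v w) ` E"
    then obtain w where w: "S *v w = (\<sigma>^2) *\<^sub>R w" and v: "v = Q *v w" by (auto simp: E_def)
    have "(Q ** S ** transpose Q) *v v = Q *v (S *v w)"
      by (simp add: v matrix_vector_mul_assoc matrix_mul_assoc[symmetric] Q2 del: transpose_matrix_vector)
    also have "\<dots> = (\<sigma>^2) *\<^sub>R v" by (simp add: w v matrix_vector_mult_scaleR)
    finally show "v \<in> {v. (Q ** S ** transpose Q) *v v = (\<sigma>^2) *\<^sub>R v}" by simp
  qed
  have "dim ((\<lambda>w. Q *v w) ` E) = dim E"
  proof (rule eucl.dim_image_eq)
    show "linear ((*v) Q)" by (rule matrix_vector_mul_linear)
    have "inj ((*v) Q)"
      by (rule inj_matrix_vector_mult) (use Q1 Q2 invertible_def in blast)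
    then show "inj_on ((*v) Q) (span E)" by (simp add: inj_on_def inj_def)
  qed
  then show "sv_mult (X ** transpose Q) \<sigma> = sv_mult X \<sigma>"
    unfolding sv_mult_def tr E' by (simp add: E_def S_def)
qed

lemma C1I:
  fixes T P Q :: "real \<Rightarrow> real \<Rightarrow> mat3"
  assumes ab: "a < b"
    and dP: "\<And>\<tau> t. \<tau> \<in> {a..b} \<Longrightarrow> t \<in> {a..b} \<Longrightarrow> ((\<lambda>s. T \<tau> s) has_vector_derivative P \<tau> t) (at t within {a..b})"
    and dQ: "\<And>\<tau> t. \<tau> \<in> {a..b} \<Longrightarrow> t \<in> {a..b} \<Longrightarrow> ((\<lambda>s. T s t) has_vector_derivative Q \<tau> t) (at \<tau> within {a..b})"
    and cP: "continuous_on ({a..b} \<times> {a..b}) (\<lambda>p. P (fst p) (snd p))"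
    and cQ: "continuous_on ({a..b} \<times> {a..b}) (\<lambda>p. Q (fst p) (snd p))"
  shows "C1_family {a..b} T"
    "\<And>\<tau> t. \<tau> \<in> {a..b} \<Longrightarrow> t \<in> {a..b} \<Longrightarrow> dt {a..b} T \<tau> t = P \<tau> t"
    "\<And>\<tau> t. \<tau> \<in> {a..b} \<Longrightarrow> t \<in> {a..b} \<Longrightarrow> dtau {a..b} T \<tau> t = Q \<tau> t"
proof -
  show eP: "\<And>\<tau> t. \<tau> \<in> {a..b} \<Longrightarrow> t \<in> {a..b} \<Longrightarrow> dt {a..b} T \<tau> t = P \<tau> t"
    unfolding dt_def by (rule vector_derivative_within_closed_interval[OF ab _ dP])
  show eQ: "\<And>\<tau> t. \<tau> \<in> {a..b} \<Longrightarrow> t \<in> {a..b} \<Longrightarrow> dtau {a..b} T \<tau> t = Q \<tau> t"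
    unfolding dtau_def by (rule vector_derivative_within_closed_interval[OF ab _ dQ])
  have c1: "continuous_on ({a..b} \<times> {a..b}) (\<lambda>(\<tau>, t). dt {a..b} T \<tau> t)"
    by (rule continuous_on_eq[OF cP]) (auto simp: eP)
  have c2: "continuous_on ({a..b} \<times> {a..b}) (\<lambda>(\<tau>, t). dtau {a..b} T \<tau> t)"
    by (rule continuous_on_eq[OF cQ]) (auto simp: eQ)
  show "C1_family {a..b} T"
    unfolding C1_family_def using c1 c2 dP dQ eP eQ by simp
qed

lemma cont_fst: "continuous_on I f \<Longrightarrow> continuous_on (I \<times> J) (\<lambda>p. f (fst p))"
  by (rule continuous_on_compose2[OF _ continuous_on_fst]) auto
lemma cont_snd: "continuous_on J f \<Longrightarrow> continuous_on (I \<times> J) (\<lambda>p. f (snd p))"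
  by (rule continuous_on_compose2[OF _ continuous_on_snd]) auto

lemma deriv_cont:
  assumes "\<And>t. t \<in> S \<Longrightarrow> (f has_vector_derivative f' t) (at t within S)"
  shows "continuous_on S f"
  using assms has_vector_derivative_continuous continuous_on_eq_continuous_within by blast

lemma hvd_eq: "(f has_vector_derivative X) F \<Longrightarrow> X = Y \<Longrightarrow> (f has_vector_derivative Y) F"
  by simp

lemma const_mm_deriv:
  "(g has_vector_derivative g') (at x within s) \<Longrightarrow>
   ((\<lambda>x. (c :: mat3) ** (g x :: mat3)) has_vector_derivative (c ** g')) (at x within s)"
  using mm_deriv[OF has_vector_derivative_const, of g g' x s c] by simp

lemma mm_const_deriv:
  "(g has_vector_derivative g') (at x within s) \<Longrightarrow>
   ((\<lambda>x. (g x :: mat3) ** (c :: mat3)) has_vector_derivative (g' ** c)) (at x within s)"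
  using mm_deriv[OF _ has_vector_derivative_const, of g g' x s c] by simp

lemma spin_skew: "transpose (spin L) = - spin L"
  by (simp add: spin_def transpose_scalar transpose_diff scaleR_diff_right)
lemma strain_sym: "transpose (strain_rate L) = strain_rate L"
  by (simp add: strain_rate_def transpose_scalar transpose_add add.commute)
lemma spin_strain: "L = spin L + strain_rate L"
proof -
  have "spin L + strain_rate L = (1/2) *\<^sub>R ((L - transpose L) + (L + transpose L))"
    by (simp only: spin_def strain_rate_def scaleR_add_right)
  also have "(L - transpose L) + (L + transpose L) = 2 *\<^sub>R L"
    by (simp add: scaleR_2)
  finally show ?thesis by simp
qed



lemma matrix_add_rdistrib: "((A::mat3) + B) ** (C::mat3) = A ** C + B ** C"
  by (rule bounded_bilinear.add_left[OF mm_bb])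
lemma matrix_diff_ldistrib: "(A::mat3) ** ((B::mat3) - C) = A ** B - A ** C"
  by (rule bounded_bilinear.diff_right[OF mm_bb])
lemma matrix_diff_rdistrib: "((A::mat3) - B) ** (C::mat3) = A ** C - B ** C"
  by (rule bounded_bilinear.diff_left[OF mm_bb])

theorem theorem2:
  fixes v :: "real^3 \<Rightarrow> real \<Rightarrow> real^3"
    and G :: "real^3 \<Rightarrow> real \<Rightarrow> mat3"
    and U :: "((real^3) \<times> real) set"
    and x :: "real \<Rightarrow> real^3"
    and F :: "real \<Rightarrow> real \<Rightarrow> mat3"
    and t0 t1 :: real
  defines "I \<equiv> {t0..t1}"
  assumes t01: "t0 < t1"
    and U_open: "open U"
    and v_diff: "\<And>y t. (y, t) \<in> U \<Longrightarrow> ((\<lambda>z. v z t) has_derivative (\<lambda>h. G y t *v h)) (at y)"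
    and G_cont: "continuous_on U (\<lambda>(y, t). G y t)"
    and v_cont: "continuous_on U (\<lambda>(y, t). v y t)"
    and x_in: "\<And>t. t \<in> I \<Longrightarrow> (x t, t) \<in> U"
    and x_traj: "\<And>t. t \<in> I \<Longrightarrow> (x has_vector_derivative v (x t) t) (at t within I)"
    and F_ode: "\<And>\<tau> t. \<tau> \<in> I \<Longrightarrow> t \<in> I \<Longrightarrow>
                  ((\<lambda>s. F \<tau> s) has_vector_derivative (G (x t) t ** F \<tau> t)) (at t within I)"
    and F_init: "\<And>\<tau>. \<tau> \<in> I \<Longrightarrow> F \<tau> \<tau> = mat 1"
  shows "\<exists>R M N.
     \<comment> \<open>(i) decomposition, and its uniqueness\<close>
     OMN_decomp I F R M N
   \<and> (\<forall>R' M' N'. OMN_decomp I F R' M' N' \<longrightarrow>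
        (\<forall>\<tau>\<in>I. \<forall>t\<in>I. R' \<tau> t = R \<tau> t \<and> M' \<tau> t = M \<tau> t \<and> N' \<tau> t = N \<tau> t))
     \<comment> \<open>(ii)\<close>
   \<and> (\<forall>\<tau>\<in>I. \<forall>t\<in>I.
        invertible (M \<tau> t) \<and> invertible (N \<tau> t)
      \<and> N \<tau> t = matrix_inv (M t \<tau>)
      \<and> same_singular_values (M \<tau> t) (F \<tau> t)
      \<and> same_singular_values (N \<tau> t) (F \<tau> t)
      \<and> transpose (M \<tau> t) ** M \<tau> t = transpose (F \<tau> t) ** F \<tau> t
      \<and> N \<tau> t ** transpose (N \<tau> t) = F \<tau> t ** transpose (F \<tau> t))
     \<comment> \<open>(iii) the factors solve the ODEs ...\<close>
   \<and> (\<forall>\<tau>\<in>I. R \<tau> \<tau> = mat 1 \<and> M \<tau> \<tau> = mat 1 \<and> transpose (N \<tau> \<tau>) = mat 1)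
   \<and> (\<forall>\<tau>\<in>I. \<forall>t\<in>I.
        ((\<lambda>s. R \<tau> s) has_vector_derivative (spin (G (x t) t) ** R \<tau> t)) (at t within I)
      \<and> ((\<lambda>s. M \<tau> s) has_vector_derivative
            ((R t \<tau> ** strain_rate (G (x t) t) ** R \<tau> t) ** M \<tau> t)) (at t within I)
      \<and> ((\<lambda>s. transpose (N s t)) has_vector_derivative
            (- (R \<tau> t ** strain_rate (G (x \<tau>) \<tau>) ** R t \<tau>) ** transpose (N \<tau> t))) (at \<tau> within I))
     \<comment> \<open>... and are the unique solutions\<close>
   \<and> (\<forall>R'. (\<forall>\<tau>\<in>I. R' \<tau> \<tau> = mat 1) \<and>
           (\<forall>\<tau>\<in>I. \<forall>t\<in>I. ((\<lambda>s. R' \<tau> s) has_vector_derivative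
                (spin (G (x t) t) ** R' \<tau> t)) (at t within I))
         \<longrightarrow> (\<forall>\<tau>\<in>I. \<forall>t\<in>I. R' \<tau> t = R \<tau> t))
   \<and> (\<forall>M'. (\<forall>\<tau>\<in>I. M' \<tau> \<tau> = mat 1) \<and>
           (\<forall>\<tau>\<in>I. \<forall>t\<in>I. ((\<lambda>s. M' \<tau> s) has_vector_derivative
                ((R t \<tau> ** strain_rate (G (x t) t) ** R \<tau> t) ** M' \<tau> t)) (at t within I))
         \<longrightarrow> (\<forall>\<tau>\<in>I. \<forall>t\<in>I. M' \<tau> t = M \<tau> t))
   \<and> (\<forall>N'. (\<forall>t\<in>I. transpose (N' t t) = mat 1) \<and>
           (\<forall>\<tau>\<in>I. \<forall>t\<in>I. ((\<lambda>s. transpose (N' s t)) has_vector_derivative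
                (- (R \<tau> t ** strain_rate (G (x \<tau>) \<tau>) ** R t \<tau>) ** transpose (N' \<tau> t))) (at \<tau> within I))
         \<longrightarrow> (\<forall>\<tau>\<in>I. \<forall>t\<in>I. N' \<tau> t = N \<tau> t))"
proof -
  have I: "I = {t0..t1}" by (simp add: I_def)
  have ab: "t0 \<le> t1" using t01 by simp
  have cx: "continuous_on I x" by (rule deriv_cont[OF x_traj])
  define A where "A t = G (x t) t" for t
  have cA: "continuous_on I A"
  proof -
    have "continuous_on I (\<lambda>t. (x t, t))" by (intro continuous_intros cx)
    from continuous_on_compose2[OF G_cont this] x_in show ?thesis
      by (auto simp: A_def)
  qed
  define W where "W t = spin (A t)" for t
  define D where "D t = strain_rate (A t)" for t
  have cW: "continuous_on I W" unfolding W_def spin_def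
    by (intro continuous_intros transpose_cont cA)
  have cD: "continuous_on I D" unfolding D_def strain_rate_def
    by (intro continuous_intros transpose_cont cA)
  have AWD: "A t = W t + D t" for t unfolding W_def D_def by (rule spin_strain)
  have WT: "transpose (W t) = - W t" for t unfolding W_def by (rule spin_skew)
  have DT: "transpose (D t) = D t" for t unfolding D_def by (rule strain_sym)
  obtain \<Omega> where \<Omega>0: "\<Omega> t0 = mat 1"
    and d\<Omega>: "\<And>t. t \<in> I \<Longrightarrow> (\<Omega> has_vector_derivative W t ** \<Omega> t) (at t within I)"
    using lin_exist[OF ab cW[unfolded I]] unfolding I by blast
  obtain \<Phi> where \<Phi>0: "\<Phi> t0 = mat 1"
    and d\<Phi>: "\<And>t. t \<in> I \<Longrightarrow> (\<Phi> has_vector_derivative A t ** \<Phi> t) (at t within I)"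
    using lin_exist[OF ab cA[unfolded I]] unfolding I by blast
  obtain \<Psi> where \<Psi>0: "\<Psi> t0 = mat 1"
    and d\<Psi>: "\<And>t. t \<in> I \<Longrightarrow> (\<Psi> has_vector_derivative - (\<Psi> t ** A t)) (at t within I)"
    using lin_exist_left[OF ab cA[unfolded I]] unfolding I by blast
  have c\<Omega>: "continuous_on I \<Omega>" by (rule deriv_cont[OF d\<Omega>])
  have c\<Phi>: "continuous_on I \<Phi>" by (rule deriv_cont[OF d\<Phi>])
  have c\<Psi>: "continuous_on I \<Psi>" by (rule deriv_cont[OF d\<Psi>])
  have d\<Omega>T: "((\<lambda>s. transpose (\<Omega> s)) has_vector_derivative - (transpose (\<Omega> t) ** W t)) (at t within I)"
    if "t \<in> I" for t
    using transpose_deriv[OF d\<Omega>[OF that]]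
    by (simp add: matrix_transpose_mul WT mm_neg_right)
  have \<Omega>orth: "transpose (\<Omega> t) ** \<Omega> t = mat 1 \<and> \<Omega> t ** transpose (\<Omega> t) = mat 1" if t: "t \<in> I" for t
  proof -
    have "(\<lambda>t. transpose (\<Omega> t) ** \<Omega> t) t = (\<lambda>t. transpose (\<Omega> t) ** \<Omega> t) t0"
    proof (rule deriv_const_zero[where a=t0 and b=t1])
      fix s assume s: "s \<in> {t0..t1}"
      have "transpose (\<Omega> s) ** (W s ** \<Omega> s) + (- (transpose (\<Omega> s) ** W s)) ** \<Omega> s = 0"
        by (simp add: mm_neg_left matrix_mul_assoc)
      then show "((\<lambda>t. transpose (\<Omega> t) ** \<Omega> t) has_vector_derivative 0) (at s within {t0..t1})"
        using mm_deriv[OF d\<Omega>T d\<Omega>, of s] s by (simp add: I)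
    qed (use t ab I in auto)
    then have "transpose (\<Omega> t) ** \<Omega> t = mat 1" using \<Omega>0 by simp
    then show ?thesis using matrix_left_right_inverse by blast
  qed
  have \<Phi>\<Psi>: "\<Psi> t ** \<Phi> t = mat 1 \<and> \<Phi> t ** \<Psi> t = mat 1" if t: "t \<in> I" for t
    using fund_inv[of t0 t1 \<Phi> A \<Psi> t] ab \<Phi>0 \<Psi>0 d\<Phi> d\<Psi> t by (auto simp: I)
  have canc1: "transpose (\<Omega> t) ** \<Omega> t = mat 1" "\<Omega> t ** transpose (\<Omega> t) = mat 1"
    "\<Psi> t ** \<Phi> t = mat 1" "\<Phi> t ** \<Psi> t = mat 1" if "t \<in> I" for t
    using \<Omega>orth[OF that] \<Phi>\<Psi>[OF that] by auto
  have canc2: "X ** transpose (\<Omega> t) ** \<Omega> t = X" "X ** \<Omega> t ** transpose (\<Omega> t) = X"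
    "X ** \<Psi> t ** \<Phi> t = X" "X ** \<Phi> t ** \<Psi> t = X" if "t \<in> I" for t X
    using canc1[OF that] by (simp_all add: matrix_mul_assoc[symmetric])
  note canc = canc1 canc2
  have Fe: "F \<tau> t = \<Phi> t ** \<Psi> \<tau>" if tau: "\<tau> \<in> I" and tt: "t \<in> I" for \<tau> t
  proof -
    have 1: "((\<lambda>s. F \<tau> s) has_vector_derivative A s ** F \<tau> s) (at s within {t0..t1})"
      if s: "s \<in> {t0..t1}" for s
      using F_ode[OF tau, of s] s by (simp add: I A_def)
    have 2: "((\<lambda>t. \<Phi> t ** \<Psi> \<tau>) has_vector_derivative A s ** (\<Phi> s ** \<Psi> \<tau>)) (at s within {t0..t1})"
      if s: "s \<in> {t0..t1}" for s
      using mm_const_deriv[OF d\<Phi>, of s "\<Psi> \<tau>"] s by (simp add: I matrix_mul_assoc)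
    show ?thesis
      using lin_unique[of t0 t1 A "\<lambda>s. F \<tau> s" "\<lambda>t. \<Phi> t ** \<Psi> \<tau>" \<tau> t, OF ab cA[unfolded I] 1 2]
        tau tt F_init canc1 I by auto
  qed
  define R where "R \<tau> t = \<Omega> t ** transpose (\<Omega> \<tau>)" for \<tau> t
  define M where "M \<tau> t = \<Omega> \<tau> ** transpose (\<Omega> t) ** \<Phi> t ** \<Psi> \<tau>" for \<tau> t
  define N where "N \<tau> t = \<Phi> t ** \<Psi> \<tau> ** \<Omega> \<tau> ** transpose (\<Omega> t)" for \<tau> t
  have RT: "transpose (R \<tau> t) = R t \<tau>" for \<tau> t
    by (simp add: R_def matrix_transpose_mul)
  have Rinv: "R \<tau> t ** R t \<tau> = mat 1" if "\<tau> \<in> I" "t \<in> I" for \<tau> t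
    using that by (simp add: R_def matrix_mul_assoc canc)
  have RR: "R \<tau> t = R s t ** R \<tau> s" if "\<tau> \<in> I" "t \<in> I" "s \<in> I" for \<tau> s t
    using that by (simp add: R_def matrix_mul_assoc canc)
  have Rtt: "R t t = mat 1" if "t \<in> I" for t
    using that by (simp add: R_def canc)
  have FRM: "F \<tau> t = R \<tau> t ** M \<tau> t" if "\<tau> \<in> I" "t \<in> I" for \<tau> t
    using that by (simp add: R_def M_def Fe matrix_mul_assoc canc)
  have FNR: "F \<tau> t = N \<tau> t ** R \<tau> t" if "\<tau> \<in> I" "t \<in> I" for \<tau> t
    using that by (simp add: R_def N_def Fe matrix_mul_assoc canc)
  have Meq: "M \<tau> t = transpose (R \<tau> t) ** F \<tau> t" if "\<tau> \<in> I" "t \<in> I" for \<tau> t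
    using that by (simp add: R_def M_def Fe matrix_mul_assoc matrix_transpose_mul canc)
  have Neq: "N \<tau> t = F \<tau> t ** transpose (R \<tau> t)" if "\<tau> \<in> I" "t \<in> I" for \<tau> t
    using that by (simp add: R_def N_def Fe matrix_mul_assoc matrix_transpose_mul canc)
  have MN: "M t \<tau> ** N \<tau> t = mat 1" if "\<tau> \<in> I" "t \<in> I" for \<tau> t
    using that by (simp add: M_def N_def matrix_mul_assoc canc)
  have RRT: "R \<tau> t ** transpose (R \<tau> t) = mat 1" "transpose (R \<tau> t) ** R \<tau> t = mat 1"
    if "\<tau> \<in> I" "t \<in> I" for \<tau> t
    using Rinv[OF that] Rinv[OF that(2,1)] by (simp_all add: RT)
  note dist = matrix_add_ldistrib matrix_add_rdistrib matrix_diff_ldistrib matrix_diff_rdistrib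
    mm_neg_left mm_neg_right matrix_mul_assoc
  have dR_t: "((\<lambda>s. R \<tau> s) has_vector_derivative W t ** R \<tau> t) (at t within I)"
    if "\<tau> \<in> I" "t \<in> I" for \<tau> t
    unfolding R_def using mm_const_deriv[OF d\<Omega>[OF that(2)], of "transpose (\<Omega> \<tau>)"]
    by (simp add: matrix_mul_assoc)
  have dR_tau: "((\<lambda>s. R s t) has_vector_derivative - (R \<tau> t ** W \<tau>)) (at \<tau> within I)"
    if "\<tau> \<in> I" "t \<in> I" for \<tau> t
    unfolding R_def using const_mm_deriv[OF d\<Omega>T[OF that(1)], of "\<Omega> t"]
    by (simp add: dist)
  have dM_t: "((\<lambda>s. M \<tau> s) has_vector_derivative (R t \<tau> ** D t ** R \<tau> t) ** M \<tau> t) (at t within I)"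
    if "\<tau> \<in> I" "t \<in> I" for \<tau> t
  proof -
    have "((\<lambda>s. \<Omega> \<tau> ** transpose (\<Omega> s) ** \<Phi> s ** \<Psi> \<tau>) has_vector_derivative
       (\<Omega> \<tau> ** transpose (\<Omega> t) ** (A t ** \<Phi> t) + \<Omega> \<tau> ** (- (transpose (\<Omega> t) ** W t)) ** \<Phi> t) ** \<Psi> \<tau>)
       (at t within I)"
      by (intro mm_const_deriv mm_deriv const_mm_deriv d\<Omega>T d\<Phi> that)
    moreover have "(\<Omega> \<tau> ** transpose (\<Omega> t) ** (A t ** \<Phi> t) + \<Omega> \<tau> ** (- (transpose (\<Omega> t) ** W t)) ** \<Phi> t) ** \<Psi> \<tau>
        = (R t \<tau> ** D t ** R \<tau> t) ** M \<tau> t"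
      using that by (simp add: R_def M_def AWD dist canc)
    ultimately show ?thesis by (simp add: M_def)
  qed
  define QM where "QM \<tau> t = W \<tau> ** \<Omega> \<tau> ** transpose (\<Omega> t) ** \<Phi> t ** \<Psi> \<tau> - \<Omega> \<tau> ** transpose (\<Omega> t) ** \<Phi> t ** \<Psi> \<tau> ** A \<tau>" for \<tau> t
  have dM_tau: "((\<lambda>s. M s t) has_vector_derivative QM \<tau> t) (at \<tau> within I)"
    if "\<tau> \<in> I" "t \<in> I" for \<tau> t
  proof -
    have "((\<lambda>s. \<Omega> s ** transpose (\<Omega> t) ** \<Phi> t ** \<Psi> s) has_vector_derivative
       \<Omega> \<tau> ** transpose (\<Omega> t) ** \<Phi> t ** (- (\<Psi> \<tau> ** A \<tau>)) + (W \<tau> ** \<Omega> \<tau>) ** transpose (\<Omega> t) ** \<Phi> t ** \<Psi> \<tau>)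
       (at \<tau> within I)"
      by (intro mm_deriv mm_const_deriv d\<Omega> d\<Psi> that)
    then show ?thesis by (simp add: M_def QM_def dist)
  qed
  have dN_tau: "((\<lambda>s. N s t) has_vector_derivative - (N \<tau> t ** (R \<tau> t ** D \<tau> ** R t \<tau>))) (at \<tau> within I)"
    if "\<tau> \<in> I" "t \<in> I" for \<tau> t
  proof -
    have "((\<lambda>s. \<Phi> t ** \<Psi> s ** \<Omega> s ** transpose (\<Omega> t)) has_vector_derivative
       (\<Phi> t ** \<Psi> \<tau> ** (W \<tau> ** \<Omega> \<tau>) + \<Phi> t ** (- (\<Psi> \<tau> ** A \<tau>)) ** \<Omega> \<tau>) ** transpose (\<Omega> t))
       (at \<tau> within I)"
      by (intro mm_const_deriv mm_deriv const_mm_deriv d\<Omega> d\<Psi> that)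
    moreover have "(\<Phi> t ** \<Psi> \<tau> ** (W \<tau> ** \<Omega> \<tau>) + \<Phi> t ** (- (\<Psi> \<tau> ** A \<tau>)) ** \<Omega> \<tau>) ** transpose (\<Omega> t)
        = - (N \<tau> t ** (R \<tau> t ** D \<tau> ** R t \<tau>))"
      using that by (simp add: R_def N_def AWD dist canc)
    ultimately show ?thesis by (simp add: N_def)
  qed
  define QN where "QN \<tau> t = \<Phi> t ** \<Psi> \<tau> ** \<Omega> \<tau> ** (- (transpose (\<Omega> t) ** W t)) + A t ** \<Phi> t ** \<Psi> \<tau> ** \<Omega> \<tau> ** transpose (\<Omega> t)" for \<tau> t
  have dN_t: "((\<lambda>s. N \<tau> s) has_vector_derivative QN \<tau> t) (at t within I)"
    if "\<tau> \<in> I" "t \<in> I" for \<tau> t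
  proof -
    have "((\<lambda>s. \<Phi> s ** \<Psi> \<tau> ** \<Omega> \<tau> ** transpose (\<Omega> s)) has_vector_derivative
       \<Phi> t ** \<Psi> \<tau> ** \<Omega> \<tau> ** (- (transpose (\<Omega> t) ** W t)) + (A t ** \<Phi> t) ** \<Psi> \<tau> ** \<Omega> \<tau> ** transpose (\<Omega> t))
       (at t within I)"
      by (intro mm_deriv mm_const_deriv d\<Omega>T d\<Phi> that)
    then show ?thesis by (simp add: N_def QN_def matrix_mul_assoc)
  qed
  have dNT_tau: "((\<lambda>s. transpose (N s t)) has_vector_derivative - (R \<tau> t ** D \<tau> ** R t \<tau>) ** transpose (N \<tau> t)) (at \<tau> within I)"
    if "\<tau> \<in> I" "t \<in> I" for \<tau> t
    using transpose_deriv[OF dN_tau[OF that]]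
    by (simp add: transpose_neg matrix_transpose_mul RT DT matrix_mul_assoc mm_neg_left)
  have dNT_t: "((\<lambda>s. transpose (N \<tau> s)) has_vector_derivative transpose (QN \<tau> t)) (at t within I)"
    if "\<tau> \<in> I" "t \<in> I" for \<tau> t
    using transpose_deriv[OF dN_t[OF that]] by simp
  have cW': "continuous_on {t0..t1} W" using cW I by simp
  have cD': "continuous_on {t0..t1} D" using cD I by simp
  have cA': "continuous_on {t0..t1} A" using cA I by simp
  note cs = cW cD cA c\<Omega> c\<Phi> c\<Psi>
  have C1R: "C1_family I R \<and> (\<forall>\<tau>\<in>I. \<forall>t\<in>I. dt I R \<tau> t = W t ** R \<tau> t)"
  proof -
    have c1: "continuous_on (I \<times> I) (\<lambda>p. W (snd p) ** R (fst p) (snd p))" unfolding R_def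
      by (intro mm_cont cont_fst cont_snd transpose_cont continuous_intros cs)
    have c2: "continuous_on (I \<times> I) (\<lambda>p. - (R (fst p) (snd p) ** W (fst p)))" unfolding R_def
      by (intro mm_cont cont_fst cont_snd transpose_cont continuous_intros cs)
    show ?thesis using C1I[OF t01, of R "\<lambda>\<tau> t. W t ** R \<tau> t" "\<lambda>\<tau> t. - (R \<tau> t ** W \<tau>)"]
      dR_t dR_tau c1 c2 unfolding I by auto
  qed
  have C1M: "C1_family I M \<and> (\<forall>\<tau>\<in>I. \<forall>t\<in>I. dt I M \<tau> t = (R t \<tau> ** D t ** R \<tau> t) ** M \<tau> t)"
  proof -
    have c1: "continuous_on (I \<times> I) (\<lambda>p. (R (snd p) (fst p) ** D (snd p) ** R (fst p) (snd p)) ** M (fst p) (snd p))"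
      unfolding R_def M_def
      by (intro mm_cont cont_fst cont_snd transpose_cont continuous_intros cs)
    have c2: "continuous_on (I \<times> I) (\<lambda>p. QM (fst p) (snd p))" unfolding QM_def
      by (intro mm_cont cont_fst cont_snd transpose_cont continuous_intros cs)
    show ?thesis using C1I[OF t01, of M "\<lambda>\<tau> t. (R t \<tau> ** D t ** R \<tau> t) ** M \<tau> t" QM]
      dM_t dM_tau c1 c2 unfolding I by auto
  qed
  have C1N: "C1_family I (\<lambda>\<tau> t. transpose (N \<tau> t)) \<and>
     (\<forall>\<tau>\<in>I. \<forall>t\<in>I. dtau I (\<lambda>\<tau> t. transpose (N \<tau> t)) \<tau> t = - (R \<tau> t ** D \<tau> ** R t \<tau>) ** transpose (N \<tau> t))"
  proof -
    have c1: "continuous_on (I \<times> I) (\<lambda>p. transpose (QN (fst p) (snd p)))" unfolding QN_def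
      by (intro mm_cont cont_fst cont_snd transpose_cont continuous_intros cs)
    have c2: "continuous_on (I \<times> I) (\<lambda>p. - (R (fst p) (snd p) ** D (fst p) ** R (snd p) (fst p)) ** transpose (N (fst p) (snd p)))"
      unfolding R_def N_def
      by (intro mm_cont cont_fst cont_snd transpose_cont continuous_intros cs)
    show ?thesis using C1I[OF t01, of "\<lambda>\<tau> t. transpose (N \<tau> t)" "\<lambda>\<tau> t. transpose (QN \<tau> t)"
        "\<lambda>\<tau> t. - (R \<tau> t ** D \<tau> ** R t \<tau>) ** transpose (N \<tau> t)"]
      dNT_t dNT_tau c1 c2 unfolding I by auto
  qed
  have Rinvm: "invertible (R \<tau> t) \<and> matrix_inv (R \<tau> t) = R t \<tau>" if "\<tau> \<in> I" "t \<in> I" for \<tau> t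
    using inv_eq[OF Rinv[OF that]] by simp
  have Minvm: "invertible (M \<tau> t) \<and> matrix_inv (M \<tau> t) = N t \<tau>" if "\<tau> \<in> I" "t \<in> I" for \<tau> t
    using inv_eq[OF MN[OF that(2,1)]] by simp
  have NM: "N \<tau> t ** M t \<tau> = mat 1" if "\<tau> \<in> I" "t \<in> I" for \<tau> t
    using MN[OF that] matrix_left_right_inverse by blast
  have Ninvm: "invertible (N \<tau> t)" if "\<tau> \<in> I" "t \<in> I" for \<tau> t
    using inv_eq[OF NM[OF that]] by simp
  have NTinvm: "invertible (transpose (N \<tau> t)) \<and> matrix_inv (transpose (N \<tau> t)) = transpose (M t \<tau>)"
    if "\<tau> \<in> I" "t \<in> I" for \<tau> t
  proof -
    have "transpose (N \<tau> t) ** transpose (M t \<tau>) = mat 1"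
      using MN[OF that] by (metis matrix_transpose_mul transpose_mat)
    then show ?thesis using inv_eq by blast
  qed
  have OMN: "OMN_decomp I F R M N"
    unfolding OMN_decomp_def linear_process_def rotational_def irrotational_def irrotational_tau_def
  proof (intro conjI ballI)
    show "C1_family I R" "C1_family I M" "C1_family I (\<lambda>\<tau> t. transpose (N \<tau> t))"
      using C1R C1M C1N by auto
    show "C1_family I R" using C1R by auto
    fix \<tau> t assume tt: "\<tau> \<in> I" "t \<in> I"
    show "F \<tau> t = R \<tau> t ** M \<tau> t" "F \<tau> t = N \<tau> t ** R \<tau> t" using FRM[OF tt] FNR[OF tt] by auto
    show "invertible (R \<tau> t)" "invertible (M \<tau> t)" "invertible (transpose (N \<tau> t))"
      using Rinvm[OF tt] Minvm[OF tt] NTinvm[OF tt] by auto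
    show "skew_sym (dt I R \<tau> t ** matrix_inv (R \<tau> t))"
      using C1R Rinvm[OF tt] Rinv[OF tt] tt
      by (simp add: skew_sym_def matrix_mul_assoc[symmetric] WT)
    show "sym_mat (dt I M \<tau> t ** matrix_inv (M \<tau> t))"
      using C1M Minvm[OF tt] MN[OF tt(2,1)] tt
      by (simp add: sym_mat_def matrix_mul_assoc[symmetric] matrix_transpose_mul RT DT)
    show "sym_mat (dtau I (\<lambda>\<tau> t. transpose (N \<tau> t)) \<tau> t ** matrix_inv (transpose (N \<tau> t)))"
    proof -
      have "transpose (N \<tau> t) ** transpose (M t \<tau>) = mat 1"
        using MN[OF tt] by (metis matrix_transpose_mul transpose_mat)
      then show ?thesis
        using C1N NTinvm[OF tt] tt
        by (simp add: sym_mat_def matrix_mul_assoc[symmetric] matrix_transpose_mul RT DT transpose_neg mm_neg_left)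
    qed
  next
    fix t assume "t \<in> I" then show "R t t = mat 1" by (rule Rtt)
  next
    fix \<tau> s t assume "\<tau> \<in> I" "s \<in> I" "t \<in> I" then show "R \<tau> t = R s t ** R \<tau> s" using RR by blast
  qed
  have spinG: "spin (G (x t) t) = W t" for t by (simp add: W_def A_def)
  have strainG: "strain_rate (G (x t) t) = D t" for t by (simp add: D_def A_def)
  have partii: "\<forall>\<tau>\<in>I. \<forall>t\<in>I.
        invertible (M \<tau> t) \<and> invertible (N \<tau> t)
      \<and> N \<tau> t = matrix_inv (M t \<tau>)
      \<and> same_singular_values (M \<tau> t) (F \<tau> t)
      \<and> same_singular_values (N \<tau> t) (F \<tau> t)
      \<and> transpose (M \<tau> t) ** M \<tau> t = transpose (F \<tau> t) ** F \<tau> t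
      \<and> N \<tau> t ** transpose (N \<tau> t) = F \<tau> t ** transpose (F \<tau> t)"
  proof (intro ballI conjI)
    fix \<tau> t assume tt: "\<tau> \<in> I" "t \<in> I"
    show "invertible (M \<tau> t)" "invertible (N \<tau> t)" using Minvm[OF tt] Ninvm[OF tt] by auto
    show "N \<tau> t = matrix_inv (M t \<tau>)" using inv_eq(2)[OF MN[OF tt]] by simp
    have MTM: "transpose (M \<tau> t) ** M \<tau> t = transpose (F \<tau> t) ** F \<tau> t"
    proof -
      have "transpose (M \<tau> t) ** M \<tau> t = transpose (F \<tau> t) ** (R \<tau> t ** transpose (R \<tau> t)) ** F \<tau> t"
        by (simp add: Meq[OF tt] matrix_transpose_mul matrix_mul_assoc)
      then show ?thesis using RRT[OF tt] by simp
    qed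
    show "transpose (M \<tau> t) ** M \<tau> t = transpose (F \<tau> t) ** F \<tau> t" by (rule MTM)
    show "same_singular_values (M \<tau> t) (F \<tau> t)"
      unfolding same_singular_values_def sv_mult_def MTM ..
    show "same_singular_values (N \<tau> t) (F \<tau> t)"
      unfolding same_singular_values_def Neq[OF tt] by (rule sv_orth[OF RRT[OF tt]])
    have "N \<tau> t ** transpose (N \<tau> t) = F \<tau> t ** (transpose (R \<tau> t) ** R \<tau> t) ** transpose (F \<tau> t)"
      by (simp add: Neq[OF tt] matrix_transpose_mul matrix_mul_assoc)
    then show "N \<tau> t ** transpose (N \<tau> t) = F \<tau> t ** transpose (F \<tau> t)" using RRT[OF tt] by simp
  qed
  have cCM: "continuous_on {t0..t1} (\<lambda>s. R s \<tau> ** D s ** R \<tau> s)" for \<tau>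
    unfolding R_def using cs I by (intro mm_cont transpose_cont continuous_intros) auto
  have cCN: "continuous_on {t0..t1} (\<lambda>s. - (R s t ** D s ** R t s))" for t
    unfolding R_def using cs I by (intro mm_cont transpose_cont continuous_intros) auto
  have uniq2: "\<forall>\<tau>\<in>I. \<forall>t\<in>I. R' \<tau> t = R \<tau> t \<and> M' \<tau> t = M \<tau> t \<and> N' \<tau> t = N \<tau> t"
    if dec: "OMN_decomp I F R' M' N'" for R' M' N'
  proof (intro ballI)
    fix \<tau> assume tau: "\<tau> \<in> I"
    have FRM': "\<And>t. t \<in> I \<Longrightarrow> F \<tau> t = R' \<tau> t ** M' \<tau> t \<and> F \<tau> t = N' \<tau> t ** R' \<tau> t"
      using dec tau unfolding OMN_decomp_def by blast
    have R'0: "R' \<tau> \<tau> = mat 1" using dec tau unfolding OMN_decomp_def linear_process_def by blast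
    have rot: "C1_family I R'" "\<And>t. t \<in> I \<Longrightarrow> invertible (R' \<tau> t) \<and> skew_sym (dt I R' \<tau> t ** matrix_inv (R' \<tau> t))"
      using dec tau unfolding OMN_decomp_def rotational_def by blast+
    have irr: "C1_family I M'" "\<And>t. t \<in> I \<Longrightarrow> invertible (M' \<tau> t) \<and> sym_mat (dt I M' \<tau> t ** matrix_inv (M' \<tau> t))"
      using dec tau unfolding OMN_decomp_def irrotational_def by blast+
    define S where "S t = dt I R' \<tau> t ** matrix_inv (R' \<tau> t)" for t
    define T where "T t = dt I M' \<tau> t ** matrix_inv (M' \<tau> t)" for t
    have Sskew: "transpose (S t) = - S t" if "t \<in> I" for t
      using rot(2)[OF that] by (simp add: S_def skew_sym_def)
    have Tsym: "transpose (T t) = T t" if "t \<in> I" for t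
      using irr(2)[OF that] by (simp add: T_def sym_mat_def)
    have dR': "((\<lambda>s. R' \<tau> s) has_vector_derivative S t ** R' \<tau> t) (at t within I)" if t: "t \<in> I" for t
    proof -
      have "((\<lambda>s. R' \<tau> s) has_vector_derivative dt I R' \<tau> t) (at t within I)"
        using rot(1) tau t unfolding C1_family_def by blast
      moreover have "dt I R' \<tau> t = S t ** R' \<tau> t"
        using inv_props(2)[of "R' \<tau> t"] rot(2)[OF t] by (simp add: S_def matrix_mul_assoc[symmetric])
      ultimately show ?thesis by simp
    qed
    have dM': "((\<lambda>s. M' \<tau> s) has_vector_derivative T t ** M' \<tau> t) (at t within I)" if t: "t \<in> I" for t
    proof -
      have "((\<lambda>s. M' \<tau> s) has_vector_derivative dt I M' \<tau> t) (at t within I)"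
        using irr(1) tau t unfolding C1_family_def by blast
      moreover have "dt I M' \<tau> t = T t ** M' \<tau> t"
        using inv_props(2)[of "M' \<tau> t"] irr(2)[OF t] by (simp add: T_def matrix_mul_assoc[symmetric])
      ultimately show ?thesis by simp
    qed
    have orth: "transpose (R' \<tau> t) ** R' \<tau> t = mat 1 \<and> R' \<tau> t ** transpose (R' \<tau> t) = mat 1" if t: "t \<in> I" for t
    proof -
      have "(\<lambda>t. transpose (R' \<tau> t) ** R' \<tau> t) t = (\<lambda>t. transpose (R' \<tau> t) ** R' \<tau> t) \<tau>"
      proof (rule deriv_const_zero[where a=t0 and b=t1])
        fix s assume s: "s \<in> {t0..t1}"
        then have sI: "s \<in> I" using I by simp
        have "transpose (R' \<tau> s) ** (S s ** R' \<tau> s) + transpose (S s ** R' \<tau> s) ** R' \<tau> s = 0"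
          using Sskew[OF sI] by (simp add: matrix_transpose_mul mm_neg_left mm_neg_right matrix_mul_assoc)
        then show "((\<lambda>t. transpose (R' \<tau> t) ** R' \<tau> t) has_vector_derivative 0) (at s within {t0..t1})"
          using mm_deriv[OF transpose_deriv[OF dR'[OF sI]] dR'[OF sI]] by (simp add: I)
      qed (use t tau I in auto)
      then have "transpose (R' \<tau> t) ** R' \<tau> t = mat 1" using R'0 by simp
      then show ?thesis using matrix_left_right_inverse by blast
    qed
    have Rsol: "((\<lambda>s. R' \<tau> s) has_vector_derivative W t ** R' \<tau> t) (at t within I)" if t: "t \<in> I" for t
    proof -
      have FF: "F \<tau> t ** F t \<tau> = mat 1" using tau t by (simp add: Fe matrix_mul_assoc canc)
      have d1: "((\<lambda>s. F \<tau> s) has_vector_derivative R' \<tau> t ** (T t ** M' \<tau> t) + (S t ** R' \<tau> t) ** M' \<tau> t) (at t within I)"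
        by (rule has_vector_derivative_transform[OF t, of _ "\<lambda>s. R' \<tau> s ** M' \<tau> s"])
           (use FRM' mm_deriv[OF dR'[OF t] dM'[OF t]] in auto)
      have d2: "((\<lambda>s. F \<tau> s) has_vector_derivative A t ** F \<tau> t) (at t within I)"
        using F_ode[OF tau t] by (simp add: A_def)
      have "A t ** F \<tau> t = R' \<tau> t ** (T t ** M' \<tau> t) + (S t ** R' \<tau> t) ** M' \<tau> t"
        using vector_derivative_unique_within_closed_interval[of t0 t1 t, unfolded cbox_interval, OF t01 _ d2[unfolded I] d1[unfolded I]]
          t I by simp
      also have "\<dots> = (R' \<tau> t ** T t ** transpose (R' \<tau> t) + S t) ** F \<tau> t"
      proof -
        have "R' \<tau> t ** T t ** transpose (R' \<tau> t) ** F \<tau> t = R' \<tau> t ** T t ** (transpose (R' \<tau> t) ** R' \<tau> t) ** M' \<tau> t"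
          using FRM'[OF t] by (simp add: matrix_mul_assoc)
        then show ?thesis using orth[OF t] FRM'[OF t] by (simp add: dist)
      qed
      finally have "A t ** F \<tau> t ** F t \<tau> = (R' \<tau> t ** T t ** transpose (R' \<tau> t) + S t) ** F \<tau> t ** F t \<tau>"
        by simp
      then have Aeq: "A t = R' \<tau> t ** T t ** transpose (R' \<tau> t) + S t"
        using FF by (simp add: matrix_mul_assoc[symmetric])
      have ATeq: "transpose (A t) = R' \<tau> t ** T t ** transpose (R' \<tau> t) - S t"
        using Tsym[OF t] Sskew[OF t] by (simp add: Aeq transpose_add matrix_transpose_mul matrix_mul_assoc)
      have "W t = (1/2) *\<^sub>R (2 *\<^sub>R S t)"
        unfolding W_def spin_def ATeq by (subst Aeq) (simp add: scaleR_2)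
      then have "W t = S t" by simp
      then show ?thesis using dR'[OF t] by simp
    qed
    fix t assume t: "t \<in> I"
    have R'R: "R' \<tau> t = R \<tau> t"
      using lin_unique[of t0 t1 W "\<lambda>s. R' \<tau> s" "\<lambda>s. R \<tau> s" \<tau> t, OF ab cW'] Rsol dR_t tau t R'0 Rtt
      by (auto simp: I)
    have "M' \<tau> t = transpose (R' \<tau> t) ** F \<tau> t"
      using orth[OF t] FRM'[OF t] by (simp add: matrix_mul_assoc)
    then have "M' \<tau> t = M \<tau> t" using Meq[OF tau t] R'R by simp
    moreover have "N' \<tau> t = F \<tau> t ** transpose (R' \<tau> t)"
    proof -
      have "F \<tau> t ** transpose (R' \<tau> t) = N' \<tau> t ** (R' \<tau> t ** transpose (R' \<tau> t))"
        using conjunct2[OF FRM'[OF t]] by (simp add: matrix_mul_assoc)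
      then show ?thesis using orth[OF t] by simp
    qed
    then have "N' \<tau> t = N \<tau> t" using Neq[OF tau t] R'R by simp
    ultimately show "R' \<tau> t = R \<tau> t \<and> M' \<tau> t = M \<tau> t \<and> N' \<tau> t = N \<tau> t" using R'R by simp
  qed
  show ?thesis
  proof (rule exI[of _ R], rule exI[of _ M], rule exI[of _ N], intro conjI)
    show "OMN_decomp I F R M N" by (rule OMN)
    show "\<forall>R' M' N'. OMN_decomp I F R' M' N' \<longrightarrow>
        (\<forall>\<tau>\<in>I. \<forall>t\<in>I. R' \<tau> t = R \<tau> t \<and> M' \<tau> t = M \<tau> t \<and> N' \<tau> t = N \<tau> t)"
      using uniq2 by blast
    show "\<forall>\<tau>\<in>I. \<forall>t\<in>I.
        invertible (M \<tau> t) \<and> invertible (N \<tau> t)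
      \<and> N \<tau> t = matrix_inv (M t \<tau>)
      \<and> same_singular_values (M \<tau> t) (F \<tau> t)
      \<and> same_singular_values (N \<tau> t) (F \<tau> t)
      \<and> transpose (M \<tau> t) ** M \<tau> t = transpose (F \<tau> t) ** F \<tau> t
      \<and> N \<tau> t ** transpose (N \<tau> t) = F \<tau> t ** transpose (F \<tau> t)" by (rule partii)
    show "\<forall>\<tau>\<in>I. R \<tau> \<tau> = mat 1 \<and> M \<tau> \<tau> = mat 1 \<and> transpose (N \<tau> \<tau>) = mat 1"
      by (auto simp: Rtt M_def N_def canc)
    show "\<forall>\<tau>\<in>I. \<forall>t\<in>I.
        ((\<lambda>s. R \<tau> s) has_vector_derivative (spin (G (x t) t) ** R \<tau> t)) (at t within I)
      \<and> ((\<lambda>s. M \<tau> s) has_vector_derivative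
            ((R t \<tau> ** strain_rate (G (x t) t) ** R \<tau> t) ** M \<tau> t)) (at t within I)
      \<and> ((\<lambda>s. transpose (N s t)) has_vector_derivative
            (- (R \<tau> t ** strain_rate (G (x \<tau>) \<tau>) ** R t \<tau>) ** transpose (N \<tau> t))) (at \<tau> within I)"
      using dR_t dM_t dNT_tau by (simp add: spinG strainG)
    show "\<forall>R'. (\<forall>\<tau>\<in>I. R' \<tau> \<tau> = mat 1) \<and>
           (\<forall>\<tau>\<in>I. \<forall>t\<in>I. ((\<lambda>s. R' \<tau> s) has_vector_derivative
                (spin (G (x t) t) ** R' \<tau> t)) (at t within I))
         \<longrightarrow> (\<forall>\<tau>\<in>I. \<forall>t\<in>I. R' \<tau> t = R \<tau> t)"
    proof (intro allI impI ballI)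
      fix R' \<tau> t assume h: "(\<forall>\<tau>\<in>I. R' \<tau> \<tau> = mat 1) \<and>
           (\<forall>\<tau>\<in>I. \<forall>t\<in>I. ((\<lambda>s. R' \<tau> s) has_vector_derivative
                (spin (G (x t) t) ** R' \<tau> t)) (at t within I))" and tt: "\<tau> \<in> I" "t \<in> I"
      show "R' \<tau> t = R \<tau> t"
        using lin_unique[of t0 t1 W "\<lambda>s. R' \<tau> s" "\<lambda>s. R \<tau> s" \<tau> t, OF ab cW'] h dR_t tt Rtt
        by (auto simp: I spinG)
    qed
    show "\<forall>M'. (\<forall>\<tau>\<in>I. M' \<tau> \<tau> = mat 1) \<and>
           (\<forall>\<tau>\<in>I. \<forall>t\<in>I. ((\<lambda>s. M' \<tau> s) has_vector_derivative
                ((R t \<tau> ** strain_rate (G (x t) t) ** R \<tau> t) ** M' \<tau> t)) (at t within I))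
         \<longrightarrow> (\<forall>\<tau>\<in>I. \<forall>t\<in>I. M' \<tau> t = M \<tau> t)"
    proof (intro allI impI ballI)
      fix M' \<tau> t assume h: "(\<forall>\<tau>\<in>I. M' \<tau> \<tau> = mat 1) \<and>
           (\<forall>\<tau>\<in>I. \<forall>t\<in>I. ((\<lambda>s. M' \<tau> s) has_vector_derivative
                ((R t \<tau> ** strain_rate (G (x t) t) ** R \<tau> t) ** M' \<tau> t)) (at t within I))"
        and tt: "\<tau> \<in> I" "t \<in> I"
      have M0: "M \<tau> \<tau> = mat 1" using tt by (simp add: M_def canc)
      show "M' \<tau> t = M \<tau> t"
        using lin_unique[of t0 t1 "\<lambda>s. R s \<tau> ** D s ** R \<tau> s" "\<lambda>s. M' \<tau> s" "\<lambda>s. M \<tau> s" \<tau> t, OF ab cCM]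
          h dM_t tt M0
        by (auto simp: I strainG)
    qed
    show "\<forall>N'. (\<forall>t\<in>I. transpose (N' t t) = mat 1) \<and>
           (\<forall>\<tau>\<in>I. \<forall>t\<in>I. ((\<lambda>s. transpose (N' s t)) has_vector_derivative
                (- (R \<tau> t ** strain_rate (G (x \<tau>) \<tau>) ** R t \<tau>) ** transpose (N' \<tau> t))) (at \<tau> within I))
         \<longrightarrow> (\<forall>\<tau>\<in>I. \<forall>t\<in>I. N' \<tau> t = N \<tau> t)"
    proof (intro allI impI ballI)
      fix N' \<tau> t assume h: "(\<forall>t\<in>I. transpose (N' t t) = mat 1) \<and>
           (\<forall>\<tau>\<in>I. \<forall>t\<in>I. ((\<lambda>s. transpose (N' s t)) has_vector_derivative
                (- (R \<tau> t ** strain_rate (G (x \<tau>) \<tau>) ** R t \<tau>) ** transpose (N' \<tau> t))) (at \<tau> within I))"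
        and tt: "\<tau> \<in> I" "t \<in> I"
      have N0: "transpose (N t t) = mat 1" using tt by (simp add: N_def canc)
      have "transpose (N' \<tau> t) = transpose (N \<tau> t)"
        using lin_unique[of t0 t1 "\<lambda>s. - (R s t ** D s ** R t s)" "\<lambda>s. transpose (N' s t)" "\<lambda>s. transpose (N s t)" t \<tau>, OF ab cCN]
          h dNT_tau tt N0
        by (auto simp: I strainG)
      then show "N' \<tau> t = N \<tau> t" by simp
    qed
  qed
qed


end
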